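(* Let $m>0$. There is a constant $C_2>0$ such that for every $\varepsilon\in(0,1]$ and every $\bar x\in\mathbb{R}^4$, $$|\overline{\mathcal{G}}_\varepsilon(\bar x)-\widetilde{\mathcal{G}}_\varepsilon(\bar x)|\le C_2.$$
   Context: For $\varepsilon\in(0,1]$ and $(x,z)\in\mathbb{R}^2\times\mathbb{R}^2$, with $k=(k_1,k_2)$: $$\overline{\mathcal{G}}_\varepsilon(x,z)=\frac1{(2\pi)^4}\int_{\mathbb{R}^4}\frac{\sin^2(\varepsilon k_1/2)\sin^2(\varepsilon k_2/2)}{\varepsilon^4k_1^2k_2^2}\cdot\frac{e^{-i(x\cdot y+k\cdot z)}}{\big(|y|^2+4\varepsilon^{-2}\sin^2(\varepsilon k_1/2)+4\varepsilon^{-2}\sin^2(\varepsilon k_2/2)+m^2\big)^2}\,\mathrm{d}y\,\mathrm{d}k,$$ $$\widetilde{\mathcal{G}}_\varepsilon(x,z)=\frac1{(2\pi)^4}\int_{\mathbb{R}^4}\frac{\sin^2(\varepsilon k_1/2)\sin^2(\varepsilon k_2/2)}{\varepsilon^4k_1^2k_2^2}\cdot\frac{e^{-i(x\cdot y+k\cdot z)}}{(|y|^2+|k|^2+m^2)^2}\,\mathrm{d}y\,\mathrm{d}k.$$ *)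

theory Defs
  imports "HOL-Analysis.Analysis"
begin

text \<open>Points of R^2 are represented as pairs real \<times> real; R^4 = R^2 \<times> R^2,
  with Lebesgue measure lborel on the product type (which is the product measure).\<close>

definition sinc_factor :: "real \<Rightarrow> real \<Rightarrow> real \<Rightarrow> real" where
  "sinc_factor \<epsilon> k1 k2 =
     (sin (\<epsilon> * k1 / 2))\<^sup>2 * (sin (\<epsilon> * k2 / 2))\<^sup>2 / (\<epsilon> ^ 4 * k1\<^sup>2 * k2\<^sup>2)"

definition Gbar :: "real \<Rightarrow> real \<Rightarrow> real \<times> real \<Rightarrow> real \<times> real \<Rightarrow> complex" where
  "Gbar m \<epsilon> x z = complex_of_real (1 / (2 * pi) ^ 4) *
     (LINT p|lborel.
        (case p of (y, (k1, k2)) \<Rightarrow>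
          complex_of_real (sinc_factor \<epsilon> k1 k2) *
          exp (- \<i> * complex_of_real (x \<bullet> y + (k1, k2) \<bullet> z)) /
          complex_of_real ((norm y ^ 2 + 4 / \<epsilon>\<^sup>2 * (sin (\<epsilon> * k1 / 2))\<^sup>2
                              + 4 / \<epsilon>\<^sup>2 * (sin (\<epsilon> * k2 / 2))\<^sup>2 + m\<^sup>2) ^ 2)))"

definition Gtilde :: "real \<Rightarrow> real \<Rightarrow> real \<times> real \<Rightarrow> real \<times> real \<Rightarrow> complex" where
  "Gtilde m \<epsilon> x z = complex_of_real (1 / (2 * pi) ^ 4) *
     (LINT p|lborel.
        (case p of (y, (k1, k2)) \<Rightarrow>
          complex_of_real (sinc_factor \<epsilon> k1 k2) *
          exp (- \<i> * complex_of_real (x \<bullet> y + (k1, k2) \<bullet> z)) /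
          complex_of_real ((norm y ^ 2 + norm (k1, k2) ^ 2 + m\<^sup>2) ^ 2)))"

end

theory Submission
  imports Defs
begin

lemma one_minus_cos_le: fixes x :: real assumes "0 \<le> x" shows "1 - cos x \<le> x^2/2"
proof -
  let ?f = "\<lambda>x::real. x^2/2 - 1 + cos x"
  have "?f 0 \<le> ?f x"
    by (rule DERIV_nonneg_imp_nondecreasing[OF assms])
       (auto intro!: derivative_eq_intros exI simp: sin_x_le_x)
  then show ?thesis by simp
qed

lemma x_minus_sin_le: fixes x :: real assumes "0 \<le> x" shows "x - sin x \<le> x^3/6"
proof -
  let ?f = "\<lambda>x::real. x^3/6 - x + sin x"
  have "?f 0 \<le> ?f x"
  proof (rule DERIV_nonneg_imp_nondecreasing[OF assms])
    fix u :: real assume "0 \<le> u" "u \<le> x"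
    then show "\<exists>y. (?f has_real_derivative y) (at u) \<and> 0 \<le> y"
      using one_minus_cos_le[of u]
      by (intro exI[of _ "u^2/2 - 1 + cos u"]) (auto intro!: derivative_eq_intros simp: power2_eq_square power3_eq_cube)
  qed
  then show ?thesis by simp
qed

lemma sq_minus_sin_sq_nonneg: fixes x :: real shows "(sin x)^2 \<le> x^2"
  using abs_sin_x_le_abs_x[of x]
  by (metis abs_ge_zero power2_abs power_mono)

lemma sq_minus_sin_sq_le: fixes x :: real shows "x^2 - (sin x)^2 \<le> x^4/3"
proof -
  have *: "x^2 - (sin x)^2 \<le> x^4/3" if "0 \<le> x" for x :: real
  proof -
    have a: "x - sin x \<le> x^3/6" using x_minus_sin_le[OF that] .
    have b: "0 \<le> x - sin x" using sin_x_le_x[OF that] by simp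
    have c: "x + sin x \<le> 2*x" using sin_x_le_x[OF that] by simp
    have d: "0 \<le> x + sin x" using sin_x_ge_neg_x[OF that] by simp
    have "x^2 - (sin x)^2 = (x - sin x) * (x + sin x)" by (simp add: power2_eq_square algebra_simps)
    also have "\<dots> \<le> (x^3/6) * (2*x)" by (rule mult_mono[OF a c]) (use that d in auto)
    also have "\<dots> = x^4/3" by (simp add: power_def)
    finally show ?thesis .
  qed
  show ?thesis
  proof (cases "0 \<le> x")
    case True then show ?thesis by (rule *)
  next
    case False then show ?thesis using *[of "-x"] by simp
  qed
qed

lemma key_poly:
  fixes U V \<mu> P Q :: real
  assumes U: "U > 0" and V: "V > 0" and mu: "\<mu> > 0"
    and P0: "0 \<le> P" and P1: "P \<le> 1" and PU: "P \<le> U/4"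
    and D0: "0 \<le> U - 4*P" and D1: "U - 4*P \<le> U^2/12"
    and Q0: "0 \<le> Q" and Q1: "Q \<le> 1" and QV: "Q \<le> V/4"
  shows "P*Q*(U-4*P)*(1+U)*(1+V) \<le> U*V*(4*P+4*Q+\<mu>)*(U+V+\<mu>)"
proof -
  define W where "W = 4*P+4*Q+\<mu>"
  define Z where "Z = U+V+\<mu>"
  have W0: "W > 0" using P0 Q0 mu by (simp add: W_def)
  have fP: "P \<le> W/4" and fQ: "Q \<le> W/4" using P0 Q0 mu by (auto simp: W_def)
  have f3: "U - 4*P \<le> Z" using P0 V mu by (simp add: Z_def)
  have f2: "P*(1+U) \<le> 2*U"
  proof (cases "U \<le> 1")
    case True
    then have "P*(1+U) \<le> P*2" using P0 by (intro mult_left_mono) auto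
    then show ?thesis using PU U by linarith
  next
    case False
    then have "P*(1+U) \<le> 1*(1+U)" using P1 U by (intro mult_right_mono) auto
    moreover have "1*(1+U) \<le> 2*U" using False by simp
    ultimately show ?thesis by (rule order_trans)
  qed
  have eq: "P*Q*(U-4*P)*(1+U)*(1+V) = (P*(1+U)) * (Q*(1+V)) * (U-4*P)" by (simp add: algebra_simps)
  show ?thesis
  proof (cases "V \<ge> 1")
    case True
    have g: "Q*(1+V) \<le> (W/4)*(2*V)"
      using mult_mono[OF fQ, of "1+V" "2*V"] True Q0 W0 by auto
    have "(P*(1+U)) * (Q*(1+V)) * (U-4*P) \<le> (2*U) * ((W/4)*(2*V)) * Z"
      by (intro mult_mono f2 g f3) (use P0 Q0 U V W0 D0 in auto)
    also have "\<dots> = U*V*W*Z" by (simp add: algebra_simps)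
    finally show ?thesis unfolding eq W_def Z_def .
  next
    case False
    have g: "Q*(1+V) \<le> V/2"
    proof -
      have "Q*(1+V) \<le> Q*2" using Q0 False by (intro mult_left_mono) auto
      then show ?thesis using QV by linarith
    qed
    have h: "(U-4*P)*(1+U) \<le> 13/12*U^2"
    proof -
      have "(U-4*P)*U \<le> U*U" using D0 P0 U by (intro mult_right_mono) auto
      then show ?thesis using D1 by (simp add: algebra_simps power2_eq_square)
    qed
    have eq2: "P*Q*(U-4*P)*(1+U)*(1+V) = P * (Q*(1+V)) * ((U-4*P)*(1+U))" by (simp add: algebra_simps)
    have "P * (Q*(1+V)) * ((U-4*P)*(1+U)) \<le> (W/4) * (V/2) * (13/12*U^2)"
      by (intro mult_mono fP g h) (use P0 Q0 U V W0 D0 in auto)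
    also have "\<dots> \<le> U*V*W*Z"
    proof -
      have "13/96 * U \<le> Z" using U V mu by (simp add: Z_def)
      then have "(U*V*W) * (13/96*U) \<le> (U*V*W) * Z" using U V W0 by (intro mult_left_mono) auto
      then show ?thesis by (simp add: algebra_simps power2_eq_square)
    qed
    finally show ?thesis unfolding eq2 W_def Z_def .
  qed
qed

lemma KB:
  fixes e m a b :: real
  assumes e: "e > 0" and m: "m > 0"
  shows "sinc_factor e a b * (a^2 - 4/e^2*(sin(e*a/2))^2) /
          ((4/e^2*(sin(e*a/2))^2 + 4/e^2*(sin(e*b/2))^2 + m^2) * (a^2+b^2+m^2))
         \<le> e^2/((1+e^2*a^2)*(1+e^2*b^2))"
proof (cases "a = 0 \<or> b = 0")
  case True
  then have "sinc_factor e a b = 0" by (auto simp: sinc_factor_def)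
  then show ?thesis by (simp add: add_pos_nonneg)
next
  case False
  define U where "U = (e*a)^2"
  define V where "V = (e*b)^2"
  define \<mu> where "\<mu> = e^2*m^2"
  define P where "P = (sin(e*a/2))^2"
  define Q where "Q = (sin(e*b/2))^2"
  have U: "U > 0" and V: "V > 0" and mu: "\<mu> > 0" using False e m by (auto simp: U_def V_def \<mu>_def)
  have P0: "0 \<le> P" and Q0: "0 \<le> Q" by (auto simp: P_def Q_def)
  have P1: "P \<le> 1" and Q1: "Q \<le> 1" by (auto simp: P_def Q_def abs_square_le_1)
  have PU: "P \<le> U/4" using sq_minus_sin_sq_nonneg[of "e*a/2"] by (simp add: P_def U_def power_divide power_mult_distrib)
  have QV: "Q \<le> V/4" using sq_minus_sin_sq_nonneg[of "e*b/2"] by (simp add: Q_def V_def power_divide power_mult_distrib)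
  have D1: "U - 4*P \<le> U^2/12"
    using sq_minus_sin_sq_le[of "e*a/2"] by (simp add: P_def U_def power_divide power_mult_distrib mult_ac)
  have D0: "0 \<le> U - 4*P" using PU by simp
  have kp: "P*Q*(U-4*P)*(1+U)*(1+V) \<le> U*V*(4*P+4*Q+\<mu>)*(U+V+\<mu>)"
    by (rule key_poly[OF U V mu P0 P1 PU D0 D1 Q0 Q1 QV])
  have W: "4*P+4*Q+\<mu> > 0" and Z: "U+V+\<mu> > 0" using P0 Q0 mu U V by auto
  have lhs: "sinc_factor e a b * (a^2 - 4/e^2*(sin(e*a/2))^2) /
          ((4/e^2*(sin(e*a/2))^2 + 4/e^2*(sin(e*b/2))^2 + m^2) * (a^2+b^2+m^2))
       = e^2 * (P*Q*(U-4*P) / (U*V*(4*P+4*Q+\<mu>)*(U+V+\<mu>)))"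
  proof -
    have s: "sinc_factor e a b = P*Q/(U*V)" unfolding sinc_factor_def P_def Q_def U_def V_def
      by (simp add: power_mult_distrib mult_ac power2_eq_square power4_eq_xxxx)
    have d: "a^2 - 4/e^2*(sin(e*a/2))^2 = (U-4*P)/e^2" unfolding P_def U_def using e
      by (simp add: power_mult_distrib field_simps)
    have al: "4/e^2*(sin(e*a/2))^2 + 4/e^2*(sin(e*b/2))^2 + m^2 = (4*P+4*Q+\<mu>)/e^2"
      unfolding P_def Q_def \<mu>_def using e by (simp add: field_simps)
    have be: "a^2+b^2+m^2 = (U+V+\<mu>)/e^2"
      unfolding U_def V_def \<mu>_def using e by (simp add: power_mult_distrib field_simps)
    have gen: "X/(U*V) * (Y/E) / ((W'/E) * (Z'/E)) = E * (X*Y/(U*V*W'*Z'))"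
      if "E > 0" for X Y E W' Z' :: real using that by (simp add: field_simps)
    show ?thesis unfolding s d al be using e by (subst gen) auto
  qed
  have "P*Q*(U-4*P) / (U*V*(4*P+4*Q+\<mu>)*(U+V+\<mu>)) \<le> 1/((1+U)*(1+V))"
    using kp U V W Z by (simp add: divide_simps mult_pos_pos add_pos_pos)  
  then have "e^2 * (P*Q*(U-4*P) / (U*V*(4*P+4*Q+\<mu>)*(U+V+\<mu>))) \<le> e^2 * (1/((1+U)*(1+V)))"
    by (intro mult_left_mono) auto
  also have "\<dots> = e^2/((1+e^2*a^2)*(1+e^2*b^2))" by (simp add: U_def V_def power_mult_distrib)
  finally show ?thesis unfolding lhs .
qed

lemma I_half: "(\<integral>\<^sup>+x. ennreal (1/(1+x^2)) * indicator {0..} x \<partial>lborel) = ennreal (pi/2)"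
proof -
  have "(\<integral>\<^sup>+x. ennreal (1/(1+x^2)) * indicator {0..} x \<partial>lborel) = ennreal (pi/2 - arctan 0)"
    by (rule nn_integral_FTC_atLeast[where F=arctan])
       (auto intro!: derivative_eq_intros simp: tendsto_arctan_at_top add_pos_nonneg field_simps)
  then show ?thesis by simp
qed

lemma I_full: "(\<integral>\<^sup>+x. ennreal (1/(1+x^2)) \<partial>lborel) \<le> ennreal pi"
proof -
  let ?g = "\<lambda>x::real. ennreal (1/(1+x^2)) * indicator {0..} x"
  have "(\<integral>\<^sup>+x. ennreal (1/(1+x^2)) \<partial>lborel) \<le> (\<integral>\<^sup>+x. ?g x + ?g (0 + (-1) * x) \<partial>lborel)"
    by (intro nn_integral_mono) (auto split: split_indicator)
  also have "\<dots> = (\<integral>\<^sup>+x. ?g x \<partial>lborel) + (\<integral>\<^sup>+x. ?g (0 + (-1) * x) \<partial>lborel)"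
    by (intro nn_integral_add) auto
  also have "(\<integral>\<^sup>+x. ?g (0 + (-1) * x) \<partial>lborel) = (\<integral>\<^sup>+x. ?g x \<partial>lborel)"
    using nn_integral_real_affine[of ?g "-1" 0] by simp
  also have "(\<integral>\<^sup>+x. ?g x \<partial>lborel) + (\<integral>\<^sup>+x. ?g x \<partial>lborel) = ennreal pi"
    unfolding I_half by (simp flip: ennreal_plus)
  finally show ?thesis .
qed

lemma I_scaled:
  fixes c :: real assumes c: "c > 0"
  shows "(\<integral>\<^sup>+x. ennreal (1/(1+(c*x)^2)) \<partial>lborel) \<le> ennreal (pi/c)"
proof -
  let ?f = "\<lambda>x::real. ennreal (1/(1+(c*x)^2))"
  have "(\<integral>\<^sup>+x. ?f x \<partial>lborel) = ennreal \<bar>1/c\<bar> * (\<integral>\<^sup>+x. ?f (0 + (1/c) * x) \<partial>lborel)"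
    using c by (intro nn_integral_real_affine) auto
  also have "(\<integral>\<^sup>+x. ?f (0 + (1/c) * x) \<partial>lborel) = (\<integral>\<^sup>+x. ennreal (1/(1+x^2)) \<partial>lborel)"
    using c by simp
  also have "ennreal \<bar>1/c\<bar> * (\<integral>\<^sup>+x. ennreal (1/(1+x^2)) \<partial>lborel) \<le> ennreal (1/c) * ennreal pi"
  proof -
    have "\<bar>1/c\<bar> = 1/c" using c by simp
    then show ?thesis using mult_left_mono[OF I_full, of "ennreal (1/c)"] by simp
  qed
  also have "\<dots> = ennreal (pi/c)" using c by (simp flip: ennreal_mult)
  finally show ?thesis .
qed

lemma I_a:
  fixes a :: real assumes a: "a > 0"
  shows "(\<integral>\<^sup>+x. ennreal (1/(x^2+a)) \<partial>lborel) \<le> ennreal (pi/sqrt a)"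
proof -
  have eq: "ennreal (1/(x^2+a)) = ennreal (1/a) * ennreal (1/(1+((1/sqrt a)*x)^2))" for x
  proof -
    have h: "1/(x^2+a) = (1/a) * (1/(1+((1/sqrt a)*x)^2))"
      using a by (simp add: power_mult_distrib power_divide field_simps add_pos_nonneg)
    show ?thesis unfolding h by (rule ennreal_mult) (use a in \<open>auto simp: add_pos_nonneg\<close>)
  qed
  have "(\<integral>\<^sup>+x. ennreal (1/(x^2+a)) \<partial>lborel) = ennreal (1/a) * (\<integral>\<^sup>+x. ennreal (1/(1+((1/sqrt a)*x)^2)) \<partial>lborel)"
    unfolding eq by (intro nn_integral_cmult) auto
  also have "\<dots> \<le> ennreal (1/a) * ennreal (pi/(1/sqrt a))"
    using a by (intro mult_left_mono I_scaled) auto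
  also have "\<dots> = ennreal (pi/sqrt a)"
    using a by (simp flip: ennreal_mult add: field_simps real_sqrt_divide) 
  finally show ?thesis .
qed

lemma prod_int:
  fixes F :: "'a::euclidean_space \<Rightarrow> real" and G :: "'b::euclidean_space \<Rightarrow> real"
  assumes [measurable]: "F \<in> borel_measurable borel" "G \<in> borel_measurable borel"
  shows "(\<integral>\<^sup>+p. ennreal (F (fst p)) * ennreal (G (snd p)) \<partial>(lborel :: ('a\<times>'b) measure))
       = (\<integral>\<^sup>+x. ennreal (F x) \<partial>lborel) * (\<integral>\<^sup>+y. ennreal (G y) \<partial>lborel)"
proof -
  have "(\<integral>\<^sup>+p. ennreal (F (fst p)) * ennreal (G (snd p)) \<partial>(lborel :: ('a\<times>'b) measure))
      = (\<integral>\<^sup>+p. ennreal (F (fst p)) * ennreal (G (snd p)) \<partial>(lborel \<Otimes>\<^sub>M lborel))"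
    by (simp only: lborel_prod)
  also have "\<dots> = (\<integral>\<^sup>+x. \<integral>\<^sup>+y. ennreal (F x) * ennreal (G y) \<partial>lborel \<partial>lborel)"
    by (subst lborel.nn_integral_fst[symmetric]) auto
  also have "\<dots> = (\<integral>\<^sup>+x. ennreal (F x) * (\<integral>\<^sup>+y. ennreal (G y) \<partial>lborel) \<partial>lborel)"
    by (intro nn_integral_cong nn_integral_cmult) auto
  also have "\<dots> = (\<integral>\<^sup>+x. ennreal (F x) \<partial>lborel) * (\<integral>\<^sup>+y. ennreal (G y) \<partial>lborel)"
    by (intro nn_integral_multc) auto
  finally show ?thesis .
qed

lemma meas_sf[measurable]:
  assumes [measurable]: "f \<in> borel_measurable M" "g \<in> borel_measurable M"
  shows "(\<lambda>p. sinc_factor e (f p) (g p)) \<in> borel_measurable M"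
  unfolding sinc_factor_def by measurable

lemma cont_meas: "continuous_on UNIV f \<Longrightarrow> f \<in> borel_measurable lborel"
  using borel_measurable_continuous_onI by simp

lemma fst_lb[measurable]: "fst \<in> borel_measurable (lborel :: ('a::euclidean_space \<times> 'b::euclidean_space) measure)"
  by (intro cont_meas continuous_intros)
lemma snd_lb[measurable]: "snd \<in> borel_measurable (lborel :: ('a::euclidean_space \<times> 'b::euclidean_space) measure)"
  by (intro cont_meas continuous_intros)

lemma meas_F1: fixes x z :: "real \<times> real" shows "(\<lambda>p. case p of (y, (k1, k2)) \<Rightarrow>
          complex_of_real (sinc_factor \<epsilon> k1 k2) *
          exp (- \<i> * complex_of_real (x \<bullet> y + (k1, k2) \<bullet> z)) /
          complex_of_real ((norm y ^ 2 + 4 / \<epsilon>\<^sup>2 * (sin (\<epsilon> * k1 / 2))\<^sup>2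
                              + 4 / \<epsilon>\<^sup>2 * (sin (\<epsilon> * k2 / 2))\<^sup>2 + m\<^sup>2) ^ 2)) \<in> borel_measurable lborel"
proof -
  have [measurable]: "(\<lambda>p::(real\<times>real)\<times>(real\<times>real). fst (snd p)) \<in> borel_measurable lborel"
       "(\<lambda>p::(real\<times>real)\<times>(real\<times>real). snd (snd p)) \<in> borel_measurable lborel"
    by (intro cont_meas continuous_intros; simp)+
  have [measurable]: "(\<lambda>p::(real\<times>real)\<times>(real\<times>real). exp (- \<i> * complex_of_real (x \<bullet> fst p + (fst (snd p), snd (snd p)) \<bullet> z))) \<in> borel_measurable lborel"
    by (intro cont_meas continuous_intros; simp)+
  have [measurable]: "(\<lambda>p::(real\<times>real)\<times>(real\<times>real). complex_of_real ((norm (fst p) ^ 2 + 4 / \<epsilon>\<^sup>2 * (sin (\<epsilon> * fst (snd p) / 2))\<^sup>2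
                              + 4 / \<epsilon>\<^sup>2 * (sin (\<epsilon> * snd (snd p) / 2))\<^sup>2 + m\<^sup>2) ^ 2)) \<in> borel_measurable lborel"
    by (intro cont_meas continuous_intros; simp)+
  show ?thesis unfolding case_prod_beta by measurable
qed
lemma meas_F2: fixes x z :: "real \<times> real" shows "(\<lambda>p. case p of (y, (k1, k2)) \<Rightarrow>
          complex_of_real (sinc_factor \<epsilon> k1 k2) *
          exp (- \<i> * complex_of_real (x \<bullet> y + (k1, k2) \<bullet> z)) /
          complex_of_real ((norm y ^ 2 + norm (k1, k2) ^ 2 + m\<^sup>2) ^ 2)) \<in> borel_measurable lborel"
proof -
  have [measurable]: "(\<lambda>p::(real\<times>real)\<times>(real\<times>real). fst (snd p)) \<in> borel_measurable lborel"
       "(\<lambda>p::(real\<times>real)\<times>(real\<times>real). snd (snd p)) \<in> borel_measurable lborel"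
    by (intro cont_meas continuous_intros; simp)+
  have [measurable]: "(\<lambda>p::(real\<times>real)\<times>(real\<times>real). exp (- \<i> * complex_of_real (x \<bullet> fst p + (fst (snd p), snd (snd p)) \<bullet> z))) \<in> borel_measurable lborel"
    by (intro cont_meas continuous_intros; simp)+
  have [measurable]: "(\<lambda>p::(real\<times>real)\<times>(real\<times>real). complex_of_real ((norm (fst p) ^ 2 + norm (fst (snd p), snd (snd p)) ^ 2 + m\<^sup>2) ^ 2)) \<in> borel_measurable lborel"
    by (intro cont_meas continuous_intros; simp)+
  show ?thesis unfolding case_prod_beta by measurable
qed

lemma Dsq:
  fixes y1 y2 c D :: real
  assumes c: "c > 0" and D: "D \<ge> y1^2 + y2^2 + c"
  shows "1/D^2 \<le> 1/((y1^2+c)*(y2^2+c))"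
proof -
  have p: "0 < (y1^2+c)*(y2^2+c)" using c by (intro mult_pos_pos add_nonneg_pos) auto
  have "(y1^2+y2^2+c)^2 - (y1^2+c)*(y2^2+c) = y1^2*y1^2 + y2^2*y2^2 + y1^2*y2^2 + c*y1^2 + c*y2^2"
    by (simp add: power2_eq_square algebra_simps)
  moreover have "0 \<le> y1^2*y1^2 + y2^2*y2^2 + y1^2*y2^2 + c*y1^2 + c*y2^2"
    using c by (intro add_nonneg_nonneg mult_nonneg_nonneg) auto
  ultimately have "(y1^2+c)*(y2^2+c) \<le> (y1^2+y2^2+c)^2" by linarith
  also have "\<dots> \<le> D^2" using D c by (intro power_mono) auto
  finally have "(y1^2+c)*(y2^2+c) \<le> D^2" .
  moreover have "D^2 > 0"
  proof -
    have "0 \<le> y1^2 + y2^2" by simp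
    then have "D > 0" using D c by linarith
    then show ?thesis by simp
  qed
  ultimately show ?thesis using p by (intro divide_left_mono) auto
qed

lemma YB:
  fixes y1 y2 \<alpha> \<beta> :: real
  assumes a: "\<alpha> > 0" and ab: "\<alpha> \<le> \<beta>"
  shows "0 \<le> 1/(y1^2+y2^2+\<alpha>)^2 - 1/(y1^2+y2^2+\<beta>)^2"
    and "1/(y1^2+y2^2+\<alpha>)^2 - 1/(y1^2+y2^2+\<beta>)^2 \<le> 2*(\<beta>-\<alpha>)/\<beta> * (1/((y1^2+\<alpha>)*(y2^2+\<alpha>)))"
proof -
  define Y where "Y = y1^2+y2^2"
  have Y: "Y \<ge> 0" by (simp add: Y_def)
  define A where "A = Y + \<alpha>"
  define B where "B = Y + \<beta>"
  have A: "A > 0" and AB: "A \<le> B" and B: "B \<ge> \<beta>" using Y a ab by (auto simp: A_def B_def)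
  have B0: "B > 0" using A AB by simp
  show "0 \<le> 1/(y1^2+y2^2+\<alpha>)^2 - 1/(y1^2+y2^2+\<beta>)^2"
    unfolding Y_def[symmetric] A_def[symmetric] B_def[symmetric]
    using A AB by (simp add: divide_simps power_mono)
  have eq: "1/A^2 - 1/B^2 = (B-A) * ((B+A)/B^2) * (1/A^2)"
    using A B0 by (simp add: field_simps power2_eq_square)
  have f1: "(B+A)/B^2 \<le> 2/\<beta>"
  proof -
    have "(B+A)/B^2 \<le> (2*B)/B^2" using AB B0 by (intro divide_right_mono) auto
    also have "\<dots> = 2/B" using B0 by (simp add: power2_eq_square)
    also have "\<dots> \<le> 2/\<beta>" using B a ab by (intro divide_left_mono) auto
    finally show ?thesis .
  qed
  have f2: "1/A^2 \<le> 1/((y1^2+\<alpha>)*(y2^2+\<alpha>))"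
    by (rule Dsq[OF a]) (simp add: A_def Y_def)
  have "1/A^2 - 1/B^2 \<le> (\<beta>-\<alpha>) * (2/\<beta>) * (1/((y1^2+\<alpha>)*(y2^2+\<alpha>)))"
    unfolding eq
    by (intro mult_mono f1 f2) (use A B0 AB a ab B in \<open>auto simp: A_def B_def\<close>)
  then show "1/(y1^2+y2^2+\<alpha>)^2 - 1/(y1^2+y2^2+\<beta>)^2 \<le> 2*(\<beta>-\<alpha>)/\<beta> * (1/((y1^2+\<alpha>)*(y2^2+\<alpha>)))"
    unfolding Y_def[symmetric] A_def[symmetric] B_def[symmetric] by (simp add: field_simps)
qed

lemma sinc_nonneg: "0 \<le> sinc_factor e a b"
  unfolding sinc_factor_def by (simp add: mult_nonneg_nonneg)

lemma s1_bound:
  fixes e a :: real assumes e: "e > 0" and a: "a \<noteq> 0"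
  shows "(sin (e*a/2))^2/((e*a)^2) \<le> 2/(1+e^2*a^2)"
proof -
  define u where "u = e*a"
  have u: "u^2 > 0" using e a by (simp add: u_def)
  have P1: "(sin (u/2))^2 \<le> 1" by (simp add: abs_square_le_1)
  have Pu: "(sin (u/2))^2 \<le> u^2/4" using sq_minus_sin_sq_nonneg[of "u/2"] by (simp add: power_divide)
  have "(sin (u/2))^2 * (1+u^2) \<le> 2*u^2"
  proof -
    have "(sin (u/2))^2 * u^2 \<le> 1 * u^2" using P1 u by (intro mult_right_mono) auto
    moreover have "(sin(u/2))^2*(1+u^2) = (sin(u/2))^2 + (sin(u/2))^2*u^2" by (simp add: algebra_simps)
    ultimately show ?thesis using Pu u by linarith
  qed
  then have "(sin (u/2))^2/u^2 \<le> 2/(1+u^2)" using u by (simp add: divide_simps add_pos_pos)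
  then show ?thesis by (simp add: u_def power_mult_distrib)
qed

lemma sinc_bound:
  fixes e a b :: real assumes e: "e > 0"
  shows "sinc_factor e a b \<le> 4/((1+e^2*a^2)*(1+e^2*b^2))"
proof (cases "a = 0 \<or> b = 0")
  case True then show ?thesis by (auto simp: sinc_factor_def add_pos_nonneg)
next
  case False
  have eq: "sinc_factor e a b = ((sin (e*a/2))^2/((e*a)^2)) * ((sin (e*b/2))^2/((e*b)^2))"
    unfolding sinc_factor_def by (simp add: power_mult_distrib power4_eq_xxxx power2_eq_square mult_ac)
  have "\<dots> \<le> (2/(1+e^2*a^2)) * (2/(1+e^2*b^2))"
    using False by (intro mult_mono s1_bound e) (auto simp: add_pos_nonneg)
  then show ?thesis unfolding eq by (simp add: field_simps)
qed

lemma sig_le: "e > 0 \<Longrightarrow> 4/e^2*(sin(e*a/2))^2 \<le> (a::real)^2"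
  using sq_minus_sin_sq_nonneg[of "e*a/2"] by (simp add: power_divide power_mult_distrib field_simps)

lemma KB2:
  fixes e m a b :: real
  assumes e: "e > 0" and m: "m > 0"
  shows "sinc_factor e a b * ((a^2+b^2+m^2) - (4/e^2*(sin(e*a/2))^2 + 4/e^2*(sin(e*b/2))^2 + m^2)) /
          ((4/e^2*(sin(e*a/2))^2 + 4/e^2*(sin(e*b/2))^2 + m^2) * (a^2+b^2+m^2))
         \<le> 2 * (e^2/((1+e^2*a^2)*(1+e^2*b^2)))"
proof -
  note k1 = KB[OF e m, of a b]
  note k2 = KB[OF e m, of b a]
  have sym: "sinc_factor e b a = sinc_factor e a b" unfolding sinc_factor_def by (simp add: mult_ac)
  have eq: "sinc_factor e a b * ((a^2+b^2+m^2) - (4/e^2*(sin(e*a/2))^2 + 4/e^2*(sin(e*b/2))^2 + m^2)) /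
          ((4/e^2*(sin(e*a/2))^2 + 4/e^2*(sin(e*b/2))^2 + m^2) * (a^2+b^2+m^2))
      = sinc_factor e a b * (a^2 - 4/e^2*(sin(e*a/2))^2) /
          ((4/e^2*(sin(e*a/2))^2 + 4/e^2*(sin(e*b/2))^2 + m^2) * (a^2+b^2+m^2))
        + sinc_factor e b a * (b^2 - 4/e^2*(sin(e*b/2))^2) /
          ((4/e^2*(sin(e*b/2))^2 + 4/e^2*(sin(e*a/2))^2 + m^2) * (b^2+a^2+m^2))"
    unfolding sym by (simp add: add_divide_distrib[symmetric] algebra_simps)
  show ?thesis unfolding eq using k1 k2 by (simp add: mult_ac)
qed

lemma norm_diff_eq:
  fixes s A B :: real and E :: complex
  assumes "norm E = 1"
  shows "norm (complex_of_real s * E / complex_of_real A - complex_of_real s * E / complex_of_real B) = \<bar>s * (1/A - 1/B)\<bar>"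
proof -
  have "complex_of_real s * E / complex_of_real A - complex_of_real s * E / complex_of_real B
        = E * complex_of_real (s * (1/A - 1/B))"
    by (simp add: divide_inverse algebra_simps)
  then have "norm (complex_of_real s * E / complex_of_real A - complex_of_real s * E / complex_of_real B)
     = norm E * norm (complex_of_real (s * (1/A - 1/B)))" by (simp only: norm_mult)
  also have "\<dots> = \<bar>s * (1/A - 1/B)\<bar>" using assms by (simp only: norm_of_real)
  finally show ?thesis .
qed

lemma norm_single_eq:
  fixes s A :: real and E :: complex
  assumes "norm E = 1"
  shows "norm (complex_of_real s * E / complex_of_real A) = \<bar>s / A\<bar>"
  using assms by (simp add: norm_mult norm_divide)

lemma Yint:
  fixes \<alpha> :: real assumes a: "\<alpha> > 0"
  shows "(\<integral>\<^sup>+y. ennreal (1/(((fst y)^2+\<alpha>)*((snd y)^2+\<alpha>))) \<partial>(lborel::(real\<times>real) measure)) \<le> ennreal (pi^2/\<alpha>)"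
proof -
  have eq: "ennreal (1/(((fst y)^2+\<alpha>)*((snd y)^2+\<alpha>))) = ennreal (1/((fst y)^2+\<alpha>)) * ennreal (1/((snd y)^2+\<alpha>))" for y :: "real\<times>real"
    using a by (simp add: ennreal_mult[symmetric] add_nonneg_pos)
  have "(\<integral>\<^sup>+y. ennreal (1/(((fst y)^2+\<alpha>)*((snd y)^2+\<alpha>))) \<partial>(lborel::(real\<times>real) measure))
      = (\<integral>\<^sup>+t. ennreal (1/(t^2+\<alpha>)) \<partial>lborel) * (\<integral>\<^sup>+t. ennreal (1/(t^2+\<alpha>)) \<partial>lborel)"
    unfolding eq by (rule prod_int) auto
  also have "\<dots> \<le> ennreal (pi/sqrt \<alpha>) * ennreal (pi/sqrt \<alpha>)"
    by (intro mult_mono I_a a) auto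
  also have "\<dots> = ennreal (pi^2/\<alpha>)"
    using a by (simp add: ennreal_mult[symmetric] power2_eq_square)
  finally show ?thesis .
qed

lemma Kint:
  fixes e :: real assumes e: "e > 0"
  shows "(\<integral>\<^sup>+k. ennreal (1/((1+e^2*(fst k)^2)*(1+e^2*(snd k)^2))) \<partial>(lborel::(real\<times>real) measure)) \<le> ennreal (pi^2/e^2)"
proof -
  have eq: "ennreal (1/((1+e^2*(fst k)^2)*(1+e^2*(snd k)^2))) = ennreal (1/(1+(e * fst k)^2)) * ennreal (1/(1+(e * snd k)^2))" for k :: "real\<times>real"
    by (simp add: ennreal_mult[symmetric] add_nonneg_pos power_mult_distrib)
  have "(\<integral>\<^sup>+k. ennreal (1/((1+e^2*(fst k)^2)*(1+e^2*(snd k)^2))) \<partial>(lborel::(real\<times>real) measure))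
      = (\<integral>\<^sup>+t. ennreal (1/(1+(e * t)^2)) \<partial>lborel) * (\<integral>\<^sup>+t. ennreal (1/(1+(e * t)^2)) \<partial>lborel)"
    unfolding eq by (rule prod_int) auto
  also have "\<dots> \<le> ennreal (pi/e) * ennreal (pi/e)"
    by (intro mult_mono I_scaled e) auto
  also have "\<dots> = ennreal (pi^2/e^2)"
    using e by (simp add: ennreal_mult[symmetric] power2_eq_square)
  finally show ?thesis .
qed

lemma main_bound:
  fixes m e :: real and x z :: "real \<times> real"
  assumes m: "m > 0" and e: "e > 0"
  shows "cmod (Gbar m e x z - Gtilde m e x z) \<le> 1/4"
proof -
  define F1 where "F1 = (\<lambda>p::(real\<times>real)\<times>(real\<times>real). case p of (y, (k1, k2)) \<Rightarrow>
          complex_of_real (sinc_factor e k1 k2) *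
          exp (- \<i> * complex_of_real (x \<bullet> y + (k1, k2) \<bullet> z)) /
          complex_of_real ((norm y ^ 2 + 4 / e\<^sup>2 * (sin (e * k1 / 2))\<^sup>2
                              + 4 / e\<^sup>2 * (sin (e * k2 / 2))\<^sup>2 + m\<^sup>2) ^ 2))"
  define F2 where "F2 = (\<lambda>p::(real\<times>real)\<times>(real\<times>real). case p of (y, (k1, k2)) \<Rightarrow>
          complex_of_real (sinc_factor e k1 k2) *
          exp (- \<i> * complex_of_real (x \<bullet> y + (k1, k2) \<bullet> z)) /
          complex_of_real ((norm y ^ 2 + norm (k1, k2) ^ 2 + m\<^sup>2) ^ 2))"
  define c where "c = complex_of_real (1 / (2 * pi) ^ 4)"
  have G: "Gbar m e x z = c * integral\<^sup>L lborel F1" "Gtilde m e x z = c * integral\<^sup>L lborel F2"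
    unfolding Gbar_def Gtilde_def c_def F1_def F2_def by simp_all
  define sk where "sk k = sinc_factor e (fst k) (snd k)" for k :: "real\<times>real"
  define al where "al k = 4/e^2*(sin(e * fst k/2))^2 + 4/e^2*(sin(e * snd k/2))^2 + m^2" for k :: "real\<times>real"
  define be where "be k = (fst k)^2 + (snd k)^2 + m^2" for k :: "real\<times>real"
  define ph where "ph k = 1/((1+e^2*(fst k)^2)*(1+e^2*(snd k)^2))" for k :: "real\<times>real"
  define Ey where "Ey p = exp (- \<i> * complex_of_real (x \<bullet> fst p + snd p \<bullet> z))" for p :: "(real\<times>real)\<times>(real\<times>real)"
  have nE: "norm (Ey p) = 1" for p
    unfolding Ey_def by (simp add: norm_exp_eq_Re)
  have F1e: "F1 p = complex_of_real (sk (snd p)) * Ey p / complex_of_real (((fst (fst p))^2 + (snd (fst p))^2 + al (snd p))^2)" for p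
  proof -
    obtain y1 y2 k1 k2 where p: "p = ((y1,y2),(k1,k2))" by (metis prod.collapse)
    have n: "norm (y1,y2) ^ 2 = y1^2 + y2^2" by (simp add: norm_Pair)
    show ?thesis unfolding p F1_def sk_def al_def Ey_def
      by (simp only: prod.case n fst_conv snd_conv) (simp add: add_ac)
  qed
  have F2e: "F2 p = complex_of_real (sk (snd p)) * Ey p / complex_of_real (((fst (fst p))^2 + (snd (fst p))^2 + be (snd p))^2)" for p
  proof -
    obtain y1 y2 k1 k2 where p: "p = ((y1,y2),(k1,k2))" by (metis prod.collapse)
    have n: "norm (y1,y2) ^ 2 = y1^2 + y2^2" by (simp add: norm_Pair)
    have n2: "norm (k1,k2) ^ 2 = k1^2 + k2^2" by (simp add: norm_Pair)
    show ?thesis unfolding p F2_def sk_def be_def Ey_def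
      by (simp only: prod.case n n2 fst_conv snd_conv) (simp add: add_ac)
  qed
  have alpos: "al k > 0" for k using m by (simp add: al_def add_nonneg_pos)
  have albe: "al k \<le> be k" for k
    using sig_le[OF e, of "fst k"] sig_le[OF e, of "snd k"] by (simp add: al_def be_def)
  have alm: "al k \<ge> m^2" for k by (simp add: al_def)
  have bem: "be k \<ge> m^2" for k by (simp add: be_def)
  have bepos: "be k > 0" for k using alpos[of k] albe[of k] by linarith
  have skn: "sk k \<ge> 0" for k by (simp add: sk_def sinc_nonneg)
  have skb: "sk k \<le> 4 * ph k" for k using sinc_bound[OF e, of "fst k" "snd k"] by (simp add: sk_def ph_def)
  have phn: "ph k \<ge> 0" for k by (simp add: ph_def add_nonneg_pos)

  define Hc where "Hc k = 2 * sk k * (be k - al k) / be k" for k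
  define Ya where "Ya k y = 1/(((fst y)^2 + al k)*((snd y)^2 + al k))" for k y :: "real\<times>real"
  define Ym where "Ym y = 1/(((fst y)^2 + m^2)*((snd y)^2 + m^2))" for y :: "real\<times>real"
  have alne: "t^2 + al k \<noteq> 0" for t k using add_nonneg_pos[OF zero_le_power2[of t] alpos[of k]] by simp
  have Hcn: "Hc k \<ge> 0" for k using skn[of k] albe[of k] bepos[of k] by (simp add: Hc_def)
  have Yan: "Ya k y \<ge> 0" for k y using alpos[of k] by (simp add: Ya_def add_nonneg_pos)
  have Ymn: "Ym y \<ge> 0" for y using m by (simp add: Ym_def add_nonneg_pos)

  have Hb: "norm (F1 p - F2 p) \<le> Hc (snd p) * Ya (snd p) (fst p)" for p
  proof -
    let ?A = "(fst (fst p))^2 + (snd (fst p))^2 + al (snd p)"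
    let ?B = "(fst (fst p))^2 + (snd (fst p))^2 + be (snd p)"
    note y = YB[OF alpos[of "snd p"] albe[of "snd p"], of "fst (fst p)" "snd (fst p)"]
    have "norm (F1 p - F2 p) = \<bar>sk (snd p) * (1/?A^2 - 1/?B^2)\<bar>"
      unfolding F1e F2e by (rule norm_diff_eq[OF nE])
    also have "\<dots> = sk (snd p) * (1/?A^2 - 1/?B^2)"
      using y(1) skn[of "snd p"] by simp
    also have "\<dots> \<le> sk (snd p) * (2*(be (snd p) - al (snd p))/be (snd p) * (1/(((fst (fst p))^2 + al (snd p))*((snd (fst p))^2 + al (snd p)))))"
      by (intro mult_left_mono y(2) skn)
    also have "\<dots> = Hc (snd p) * Ya (snd p) (fst p)" by (simp add: Hc_def Ya_def)
    finally show ?thesis .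
  qed

  have Nb: "norm (F1 p) \<le> 4 * (Ym (fst p) * ph (snd p))" "norm (F2 p) \<le> 4 * (Ym (fst p) * ph (snd p))" for p
  proof -
    have d1: "1/((fst (fst p))^2 + (snd (fst p))^2 + al (snd p))^2 \<le> Ym (fst p)"
      unfolding Ym_def using m alm[of "snd p"] by (intro Dsq) auto
    have d2: "1/((fst (fst p))^2 + (snd (fst p))^2 + be (snd p))^2 \<le> Ym (fst p)"
      unfolding Ym_def using m bem[of "snd p"] by (intro Dsq) auto
    have "norm (F1 p) = \<bar>sk (snd p) / ((fst (fst p))^2 + (snd (fst p))^2 + al (snd p))^2\<bar>"
      unfolding F1e by (rule norm_single_eq[OF nE])
    also have "\<dots> = sk (snd p) * (1/((fst (fst p))^2 + (snd (fst p))^2 + al (snd p))^2)"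
      using skn[of "snd p"] by simp
    also have "\<dots> \<le> (4 * ph (snd p)) * Ym (fst p)"
      by (intro mult_mono skb d1 skn) (use phn in auto)
    finally show "norm (F1 p) \<le> 4 * (Ym (fst p) * ph (snd p))" by (simp add: mult_ac)
    have "norm (F2 p) = \<bar>sk (snd p) / ((fst (fst p))^2 + (snd (fst p))^2 + be (snd p))^2\<bar>"
      unfolding F2e by (rule norm_single_eq[OF nE])
    also have "\<dots> = sk (snd p) * (1/((fst (fst p))^2 + (snd (fst p))^2 + be (snd p))^2)"
      using skn[of "snd p"] by simp
    also have "\<dots> \<le> (4 * ph (snd p)) * Ym (fst p)"
      by (intro mult_mono skb d2 skn) (use phn in auto)
    finally show "norm (F2 p) \<le> 4 * (Ym (fst p) * ph (snd p))" by (simp add: mult_ac)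
  qed

  have measYm[measurable]: "Ym \<in> borel_measurable borel" unfolding Ym_def
    using m by (intro borel_measurable_continuous_onI continuous_intros) (auto simp: add_nonneg_pos)
  have pos1: "1 + e^2*t^2 \<noteq> 0" for t :: real using add_pos_nonneg[of 1 "e^2*t^2"] by auto
  have measph[measurable]: "ph \<in> borel_measurable borel" unfolding ph_def
    by (intro borel_measurable_continuous_onI continuous_intros) (auto simp: pos1)

  have phint: "(\<integral>\<^sup>+k. ennreal (ph k) \<partial>lborel) \<le> ennreal (pi^2/e^2)"
    unfolding ph_def by (rule Kint[OF e])
  have Ymint: "(\<integral>\<^sup>+y. ennreal (Ym y) \<partial>lborel) \<le> ennreal (pi^2/m^2)"
    unfolding Ym_def using m by (intro Yint) auto

  have fin: "(\<integral>\<^sup>+p. ennreal (4 * (Ym (fst p) * ph (snd p))) \<partial>(lborel::((real\<times>real)\<times>(real\<times>real)) measure)) < \<infinity>"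
  proof -
    have "(\<integral>\<^sup>+p. ennreal (4 * (Ym (fst p) * ph (snd p))) \<partial>(lborel::((real\<times>real)\<times>(real\<times>real)) measure))
        = (\<integral>\<^sup>+p. ennreal 4 * (ennreal (Ym (fst p)) * ennreal (ph (snd p))) \<partial>(lborel::((real\<times>real)\<times>(real\<times>real)) measure))"
      using Ymn phn by (intro nn_integral_cong) (simp add: ennreal_mult)
    also have "\<dots> = ennreal 4 * (\<integral>\<^sup>+p. ennreal (Ym (fst p)) * ennreal (ph (snd p)) \<partial>(lborel::((real\<times>real)\<times>(real\<times>real)) measure))"
      by (intro nn_integral_cmult) measurable
    also have "\<dots> = ennreal 4 * ((\<integral>\<^sup>+y. ennreal (Ym y) \<partial>lborel) * (\<integral>\<^sup>+k. ennreal (ph k) \<partial>lborel))"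
      by (subst prod_int) auto
    also have "\<dots> \<le> ennreal 4 * (ennreal (pi^2/m^2) * ennreal (pi^2/e^2))"
      by (intro mult_left_mono mult_mono Ymint phint) auto
    also have "\<dots> < \<infinity>" by (simp add: ennreal_mult_less_top)
    finally show ?thesis .
  qed

  have measF1[measurable]: "F1 \<in> borel_measurable lborel" unfolding F1_def by (rule meas_F1)
  have measF2[measurable]: "F2 \<in> borel_measurable lborel" unfolding F2_def by (rule meas_F2)
  have int1: "integrable lborel F1"
  proof (rule integrableI_bounded[OF measF1])
    have "(\<integral>\<^sup>+p. ennreal (norm (F1 p)) \<partial>lborel) \<le> (\<integral>\<^sup>+p. ennreal (4 * (Ym (fst p) * ph (snd p))) \<partial>lborel)"
      by (intro nn_integral_mono ennreal_leI Nb)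
    then show "(\<integral>\<^sup>+p. ennreal (norm (F1 p)) \<partial>lborel) < \<infinity>" using fin by (rule le_less_trans)
  qed
  have int2: "integrable lborel F2"
  proof (rule integrableI_bounded[OF measF2])
    have "(\<integral>\<^sup>+p. ennreal (norm (F2 p)) \<partial>lborel) \<le> (\<integral>\<^sup>+p. ennreal (4 * (Ym (fst p) * ph (snd p))) \<partial>lborel)"
      by (intro nn_integral_mono ennreal_leI Nb)
    then show "(\<integral>\<^sup>+p. ennreal (norm (F2 p)) \<partial>lborel) < \<infinity>" using fin by (rule le_less_trans)
  qed
  have intd: "integrable lborel (\<lambda>p. F1 p - F2 p)" using int1 int2 by (rule Bochner_Integration.integrable_diff)

  have cal: "continuous_on UNIV (\<lambda>p::(real\<times>real)\<times>(real\<times>real). al (snd p))" unfolding al_def by (intro continuous_intros) auto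
  have cbe: "continuous_on UNIV (\<lambda>p::(real\<times>real)\<times>(real\<times>real). be (snd p))" unfolding be_def by (intro continuous_intros)
  have bene: "be k \<noteq> 0" for k using bepos[of k] by simp
  have measHY: "(\<lambda>p. ennreal (Hc (snd p) * Ya (snd p) (fst p))) \<in> borel_measurable (lborel \<Otimes>\<^sub>M lborel :: ((real\<times>real)\<times>(real\<times>real)) measure)"
  proof -
    have [measurable]: "(\<lambda>p::(real\<times>real)\<times>(real\<times>real). fst (snd p)) \<in> borel_measurable lborel"
         "(\<lambda>p::(real\<times>real)\<times>(real\<times>real). snd (snd p)) \<in> borel_measurable lborel"
      by (intro cont_meas continuous_intros; simp)+
    have [measurable]: "(\<lambda>p::(real\<times>real)\<times>(real\<times>real). (be (snd p) - al (snd p)) / be (snd p) * Ya (snd p) (fst p)) \<in> borel_measurable lborel"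
    proof (rule cont_meas)
      show "continuous_on UNIV (\<lambda>p::(real\<times>real)\<times>(real\<times>real). (be (snd p) - al (snd p)) / be (snd p) * Ya (snd p) (fst p))"
        unfolding Ya_def by (intro continuous_intros cal cbe) (auto simp: alne bene)
    qed
    have eq: "(\<lambda>p. ennreal (Hc (snd p) * Ya (snd p) (fst p))) = (\<lambda>p. ennreal (2 * sinc_factor e (fst (snd p)) (snd (snd p)) * ((be (snd p) - al (snd p)) / be (snd p) * Ya (snd p) (fst p))))"
      by (simp add: Hc_def sk_def mult_ac)
    show ?thesis unfolding lborel_prod eq by measurable
  qed

  have inner: "(\<integral>\<^sup>+y. ennreal (Hc k * Ya k y) \<partial>lborel) \<le> ennreal (4 * pi^2 * e^2 * ph k)" for k
  proof -
    have "(\<integral>\<^sup>+y. ennreal (Hc k * Ya k y) \<partial>lborel) = ennreal (Hc k) * (\<integral>\<^sup>+y. ennreal (Ya k y) \<partial>lborel)"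
    proof -
      have "(\<integral>\<^sup>+y. ennreal (Hc k * Ya k y) \<partial>lborel) = (\<integral>\<^sup>+y. ennreal (Hc k) * ennreal (Ya k y) \<partial>lborel)"
        using Hcn Yan by (intro nn_integral_cong) (simp add: ennreal_mult)
      also have "\<dots> = ennreal (Hc k) * (\<integral>\<^sup>+y. ennreal (Ya k y) \<partial>lborel)"
      proof (rule nn_integral_cmult)
        show "(\<lambda>y. ennreal (Ya k y)) \<in> borel_measurable lborel"
          unfolding Ya_def using alpos[of k]
          by (intro measurable_compose[OF _ measurable_ennreal] cont_meas continuous_intros) (auto simp: alne)
      qed
      finally show ?thesis .
    qed
    also have "\<dots> \<le> ennreal (Hc k) * ennreal (pi^2 / al k)"
      unfolding Ya_def by (intro mult_left_mono Yint alpos) auto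
    also have "\<dots> = ennreal (Hc k * (pi^2 / al k))" using Hcn[of k] alpos[of k] by (subst ennreal_mult) auto
    also have "\<dots> \<le> ennreal (4 * pi^2 * e^2 * ph k)"
    proof (rule ennreal_leI)
      have kb: "sk k * (be k - al k) / (al k * be k) \<le> 2 * (e^2/((1+e^2*(fst k)^2)*(1+e^2*(snd k)^2)))"
        unfolding sk_def al_def be_def by (rule KB2[OF e m])
      have "Hc k * (pi^2 / al k) = 2 * pi^2 * (sk k * (be k - al k) / (al k * be k))"
        using alpos[of k] bepos[of k] by (simp add: Hc_def divide_inverse inverse_mult_distrib mult_ac)
      also have "\<dots> \<le> 2 * pi^2 * (2 * (e^2/((1+e^2*(fst k)^2)*(1+e^2*(snd k)^2))))" by (intro mult_left_mono kb) auto
      also have "\<dots> = 4 * pi^2 * e^2 * ph k" by (simp add: ph_def)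
      finally show "Hc k * (pi^2 / al k) \<le> 4 * pi^2 * e^2 * ph k" .
    qed
    finally show ?thesis .
  qed

  have main_nn: "(\<integral>\<^sup>+p. ennreal (norm (F1 p - F2 p)) \<partial>lborel) \<le> ennreal (4 * pi^4)"
  proof -
    have "(\<integral>\<^sup>+p. ennreal (norm (F1 p - F2 p)) \<partial>lborel) \<le> (\<integral>\<^sup>+p. ennreal (Hc (snd p) * Ya (snd p) (fst p)) \<partial>lborel)"
      by (intro nn_integral_mono ennreal_leI Hb)
    also have "\<dots> = (\<integral>\<^sup>+p. ennreal (Hc (snd p) * Ya (snd p) (fst p)) \<partial>(lborel \<Otimes>\<^sub>M lborel :: ((real\<times>real)\<times>(real\<times>real)) measure))"
      by (simp only: lborel_prod)
    also have "\<dots> = (\<integral>\<^sup>+k. (\<integral>\<^sup>+y. ennreal (Hc k * Ya k y) \<partial>lborel) \<partial>lborel)"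
      using lborel_pair.nn_integral_snd[OF measHY] by simp
    also have "\<dots> \<le> (\<integral>\<^sup>+k. ennreal (4 * pi^2 * e^2) * ennreal (ph k) \<partial>lborel)"
      using inner phn by (intro nn_integral_mono) (simp add: ennreal_mult[symmetric])
    also have "\<dots> = ennreal (4 * pi^2 * e^2) * (\<integral>\<^sup>+k. ennreal (ph k) \<partial>lborel)"
      by (intro nn_integral_cmult) measurable
    also have "\<dots> \<le> ennreal (4 * pi^2 * e^2) * ennreal (pi^2/e^2)"
      by (intro mult_left_mono phint) auto
    also have "\<dots> = ennreal (4 * pi^4)"
      proof -
        have "4 * pi^2 * e^2 * (pi^2/e^2) = 4 * pi^4" using e by (simp add: field_simps power4_eq_xxxx power2_eq_square)
        then show ?thesis by (subst ennreal_mult[symmetric]) auto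
      qed
    finally show ?thesis .
  qed

  have nI: "norm (integral\<^sup>L lborel (\<lambda>p. F1 p - F2 p)) \<le> 4 * pi^4"
  proof -
    have "ennreal (norm (integral\<^sup>L lborel (\<lambda>p. F1 p - F2 p))) \<le> ennreal (4 * pi^4)"
      using integral_norm_bound_ennreal[OF intd] main_nn by (rule order_trans)
    then show ?thesis by (simp add: ennreal_le_iff)
  qed
  have "Gbar m e x z - Gtilde m e x z = c * integral\<^sup>L lborel (\<lambda>p. F1 p - F2 p)"
    unfolding G Bochner_Integration.integral_diff[OF int1 int2] by (simp add: algebra_simps)
  moreover have nc: "norm c = 1 / (2 * pi) ^ 4" unfolding c_def by (simp only: norm_of_real) simp
  ultimately have "cmod (Gbar m e x z - Gtilde m e x z) = (1 / (2 * pi) ^ 4) * norm (integral\<^sup>L lborel (\<lambda>p. F1 p - F2 p))"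
    by (simp only: norm_mult)
  also have "\<dots> \<le> (1 / (2 * pi) ^ 4) * (4 * pi^4)" by (intro mult_left_mono nI) auto
  also have "\<dots> = 1/4" proof -
    have "(1 / (2 * pi) ^ 4) * (4 * pi^4) = (4 * pi^4) / (16 * pi^4)" by (simp add: power_mult_distrib)
    also have "\<dots> = 1/4" by simp
    finally show ?thesis .
  qed
  finally show ?thesis .
qed

theorem mainTheorem14:
  fixes m :: real
  assumes "m > 0"
  shows "\<exists>C2 > 0. \<forall>\<epsilon> \<in> {0<..1}. \<forall>x z :: real \<times> real.
           cmod (Gbar m \<epsilon> x z - Gtilde m \<epsilon> x z) \<le> C2"
proof (intro exI[of _ "1/4"] conjI ballI allI)
  fix \<epsilon> :: real and x z :: "real \<times> real"
  assume "\<epsilon> \<in> {0<..1}"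
  then have "\<epsilon> > 0" by simp
  then show "cmod (Gbar m \<epsilon> x z - Gtilde m \<epsilon> x z) \<le> 1/4" by (rule main_bound[OF assms])
qed simp

end
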